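(* Let $\mathcal{T}=(\mathbb{K}_i,\phi_i)_{i=0,\dots,m}$ be a tower with $\mathbb{K}_0=\emptyset$ whose maps are elementary inclusions or elementary contractions, named according to the naming convention below, and let $\hat{\mathbb{K}}_0,\dots,\hat{\mathbb{K}}_m$ be the active small coning construction. For every $0\le i\le m$, $\mathbb{K}_i\subseteq\hat{\mathbb{K}}_i$ and the complex $\hat{\mathbb{K}}_i$ collapses to $\mathbb{K}_i$.
   Context: A free face of a complex is a simplex with exactly one proper coface; an elementary collapse removes a free face and its unique proper coface; $\mathbb{K}$ collapses to $\mathbb{L}$ if a sequence of elementary collapses transforms $\mathbb{K}$ into $\mathbb{L}$. Elementary inclusion: $\mathbb{K}_{i+1}=\mathbb{K}_i\cup\{\sigma\}$, $\sigma\notin\mathbb{K}_i$. Elementary contraction of distinct vertices $u,v$: for one of them, say $v$, the vertex set of $\mathbb{K}_{i+1}$ is that of $\mathbb{K}_i$ minus $v$, $\phi_i(u)=\phi_i(v)=u$, identity elsewhere, $\mathbb{K}_{i+1}=\phi_i(\mathbb{K}_i)$. Active small coning construction: $\hat{\mathbb{K}}_0=\emptyset$; vertices flagged active/inactive, simplex active iff all its vertices are; $\mathrm{Act}\overline{\mathrm{St}}(w,\hat{\mathbb{K}}_i)$ = active simplices of $\hat{\mathbb{K}}_i$ in the closed star of $w$. Inclusion of $\sigma$: add $\sigma$, new vertex active. Contraction of $u,v$: if $|\mathrm{Act}\overline{\mathrm{St}}(u,\hat{\mathbb{K}}_i)|\le|\mathrm{Act}\overline{\mathrm{St}}(v,\hat{\mathbb{K}}_i)|$,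 $\hat{\mathbb{K}}_{i+1}=\hat{\mathbb{K}}_i\cup\{\{v\}\cup\tau:\tau\in\mathrm{Act}\overline{\mathrm{St}}(u,\hat{\mathbb{K}}_i)\}$ and $u$ is marked inactive; otherwise the same with $u,v$ exchanged. Naming convention: each contraction maps $u,v$ to the vertex not marked inactive. *)

theory Defs
  imports Main
begin

definition simplicial_complex :: "'v set set \<Rightarrow> bool" where
  "simplicial_complex K \<longleftrightarrow> finite K \<and>
     (\<forall>\<sigma>\<in>K. finite \<sigma> \<and> \<sigma> \<noteq> {} \<and> (\<forall>\<tau>. \<tau> \<subseteq> \<sigma> \<and> \<tau> \<noteq> {} \<longrightarrow> \<tau> \<in> K))"

definition vertices :: "'v set set \<Rightarrow> 'v set" where
  "vertices K = \<Union>K"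

definition free_face :: "'v set \<Rightarrow> 'v set set \<Rightarrow> bool" where
  "free_face \<tau> K \<longleftrightarrow> \<tau> \<in> K \<and> (\<exists>!\<sigma>. \<sigma> \<in> K \<and> \<tau> \<subset> \<sigma>)"

definition elementary_collapse :: "'v set set \<Rightarrow> 'v set set \<Rightarrow> bool" where
  "elementary_collapse K K' \<longleftrightarrow>
     (\<exists>\<tau> \<sigma>. free_face \<tau> K \<and> \<sigma> \<in> K \<and> \<tau> \<subset> \<sigma> \<and> K' = K - {\<tau>, \<sigma>})"

definition collapses :: "'v set set \<Rightarrow> 'v set set \<Rightarrow> bool" where
  "collapses K L \<longleftrightarrow> elementary_collapse\<^sup>*\<^sup>* K L"

definition contract :: "'v set set \<Rightarrow> 'v \<Rightarrow> 'v \<Rightarrow> 'v set set" where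
  "contract K r w = (\<lambda>\<sigma>. (\<lambda>x. if x = r then w else x) ` \<sigma>) ` K"

text \<open>Steps of a tower: inclusion of a simplex, or contraction of two (unordered) vertices.\<close>
datatype 'v step = Incl "'v set" | Contr 'v 'v

definition closed_star :: "'v \<Rightarrow> 'v set set \<Rightarrow> 'v set set" where
  "closed_star w K = {\<tau> \<in> K. \<exists>\<sigma>\<in>K. w \<in> \<sigma> \<and> \<tau> \<subseteq> \<sigma>}"

definition act_closed_star :: "'v \<Rightarrow> 'v set set \<Rightarrow> 'v set \<Rightarrow> 'v set set" where
  "act_closed_star w K A = {\<tau> \<in> closed_star w K. \<tau> \<subseteq> A}"

definition coning_removed :: "'v set set \<Rightarrow> 'v set \<Rightarrow> 'v \<Rightarrow> 'v \<Rightarrow> 'v" where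
  "coning_removed H A u v =
     (if card (act_closed_star u H A) \<le> card (act_closed_star v H A) then u else v)"

definition coning_survivor :: "'v set set \<Rightarrow> 'v set \<Rightarrow> 'v \<Rightarrow> 'v \<Rightarrow> 'v" where
  "coning_survivor H A u v =
     (if card (act_closed_star u H A) \<le> card (act_closed_star v H A) then v else u)"

definition cone_step :: "'v set set \<Rightarrow> 'v set \<Rightarrow> 'v \<Rightarrow> 'v \<Rightarrow> 'v set set" where
  "cone_step H A r w = H \<union> (insert w) ` act_closed_star r H A"

fun small_coning :: "(nat \<Rightarrow> 'v step) \<Rightarrow> nat \<Rightarrow> 'v set set \<times> 'v set" where
  "small_coning s 0 = ({}, {})"
| "small_coning s (Suc i) =
     (case small_coning s i of (H, A) \<Rightarrow>
       (case s i of
          Incl \<sigma> \<Rightarrow> (insert \<sigma> H, if card \<sigma> = 1 then A \<union> \<sigma> else A)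
        | Contr u v \<Rightarrow>
            (cone_step H A (coning_removed H A u v) (coning_survivor H A u v),
             A - {coning_removed H A u v})))"

definition hatK :: "(nat \<Rightarrow> 'v step) \<Rightarrow> nat \<Rightarrow> 'v set set" where
  "hatK s i = fst (small_coning s i)"

definition active :: "(nat \<Rightarrow> 'v step) \<Rightarrow> nat \<Rightarrow> 'v set" where
  "active s i = snd (small_coning s i)"

text \<open>The tower (K_i) with steps s is a tower of elementary inclusions / contractions
  starting at the empty complex, named by the convention (contraction maps onto the
  vertex not marked inactive). New vertices introduced by inclusions are fresh.\<close>
definition coning_tower :: "(nat \<Rightarrow> 'v set set) \<Rightarrow> (nat \<Rightarrow> 'v step) \<Rightarrow> nat \<Rightarrow> bool" where
  "coning_tower K s m \<longleftrightarrow>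
     K 0 = {} \<and>
     (\<forall>i\<le>m. simplicial_complex (K i)) \<and>
     (\<forall>i<m. case s i of
        Incl \<sigma> \<Rightarrow> \<sigma> \<notin> K i \<and> K (Suc i) = insert \<sigma> (K i) \<and>
                   (\<forall>j\<le>i. \<sigma> \<inter> vertices (K j) = {} \<or> card \<sigma> \<noteq> 1)
      | Contr u v \<Rightarrow> u \<noteq> v \<and> u \<in> vertices (K i) \<and> v \<in> vertices (K i) \<and>
          K (Suc i) = contract (K i)
              (coning_removed (hatK s i) (active s i) u v)
              (coning_survivor (hatK s i) (active s i) u v))"

end

theory Submission imports Defs begin

definition actpart :: "'v set set \<Rightarrow> 'v set \<Rightarrow> 'v set set" where
  "actpart H A = {\<rho> \<in> H. \<rho> \<subseteq> A}"

definition fc :: "'v set set \<Rightarrow> bool" where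
  "fc H \<longleftrightarrow> (\<forall>\<rho>\<in>H. \<forall>\<tau>. \<tau> \<subseteq> \<rho> \<and> \<tau> \<noteq> {} \<longrightarrow> \<tau> \<in> H)"

lemma ec_sub: "elementary_collapse L L' \<Longrightarrow> L' \<subseteq> L"
  unfolding elementary_collapse_def by auto

lemma coll_sub: "elementary_collapse\<^sup>*\<^sup>* L K \<Longrightarrow> K \<subseteq> L"
  by (induction rule: rtranclp_induct) (auto dest: ec_sub)

lemma lift_aux:
  assumes "elementary_collapse\<^sup>*\<^sup>* L K"
  shows "(\<forall>\<rho>\<in>C. \<forall>\<tau>\<in>L. \<tau> \<subseteq> \<rho> \<longrightarrow> \<tau> \<in> K) \<Longrightarrow> elementary_collapse\<^sup>*\<^sup>* (L \<union> C) (K \<union> C)"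
  using assms
proof (induction rule: converse_rtranclp_induct)
  case base
  then show ?case by simp
next
  case (step y z)
  have zy: "z \<subseteq> y" using step(1) by (rule ec_sub)
  have Kz: "K \<subseteq> z" using step(2) by (rule coll_sub)
  have c: "\<forall>\<rho>\<in>C. \<forall>\<tau>\<in>z. \<tau> \<subseteq> \<rho> \<longrightarrow> \<tau> \<in> K" using step(4) zy by blast
  obtain \<tau> \<sigma> where ff: "free_face \<tau> y" and sy: "\<sigma> \<in> y" and ts: "\<tau> \<subset> \<sigma>" and z: "z = y - {\<tau>, \<sigma>}"
    using step(1) unfolding elementary_collapse_def by blast
  have ty: "\<tau> \<in> y" using ff unfolding free_face_def by blast
  have tK: "\<tau> \<notin> K" using Kz z by blast
  have sK: "\<sigma> \<notin> K" using Kz z by blast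
  have tC: "\<tau> \<notin> C" using step(4) ty tK by blast
  have sC: "\<sigma> \<notin> C" using step(4) sy sK by blast
  have noC: "\<forall>\<rho>\<in>C. \<not> \<tau> \<subset> \<rho>" using step(4) ty tK by blast
  have "free_face \<tau> (y \<union> C)"
  proof -
    obtain \<sigma>1 where s1: "\<sigma>1 \<in> y \<and> \<tau> \<subset> \<sigma>1" and u: "\<And>x. x \<in> y \<and> \<tau> \<subset> x \<Longrightarrow> x = \<sigma>1"
      using ff unfolding free_face_def by auto
    have "\<exists>!x. x \<in> y \<union> C \<and> \<tau> \<subset> x"
    proof (rule ex1I[of _ \<sigma>1])
      show "\<sigma>1 \<in> y \<union> C \<and> \<tau> \<subset> \<sigma>1" using s1 by blast
    next
      fix x assume "x \<in> y \<union> C \<and> \<tau> \<subset> x"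
      then show "x = \<sigma>1" using u noC by blast
    qed
    then show ?thesis using ty unfolding free_face_def by blast
  qed
  moreover have "z \<union> C = (y \<union> C) - {\<tau>, \<sigma>}" using z tC sC by blast
  ultimately have "elementary_collapse (y \<union> C) (z \<union> C)"
    unfolding elementary_collapse_def using sy ts by blast
  then show ?case using step(3)[OF c] by (rule converse_rtranclp_into_rtranclp)
qed

lemma lift:
  assumes "collapses L K" "\<forall>\<rho>\<in>C. \<forall>\<tau>\<in>L. \<tau> \<subseteq> \<rho> \<longrightarrow> \<tau> \<in> K"
  shows "collapses (L \<union> C) (K \<union> C)"
  using lift_aux assms unfolding collapses_def by blast

lemma cone_collapse:
  assumes "finite M" "\<forall>\<rho>\<in>M. finite \<rho>" "r \<noteq> w"
    "\<forall>\<rho>\<in>M. r \<in> \<rho> \<and> w \<notin> \<rho> \<longrightarrow> insert w \<rho> \<in> M"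
    "\<forall>\<rho>\<in>M. r \<in> \<rho> \<longrightarrow> \<rho> - {w} \<in> M"
  shows "collapses M {\<rho>\<in>M. r \<notin> \<rho>}"
  using assms
proof (induction "card {\<rho>\<in>M. r \<in> \<rho>}" arbitrary: M rule: less_induct)
  case less
  define P where "P = {\<rho>\<in>M. r \<in> \<rho> \<and> w \<notin> \<rho>}"
  show ?case
  proof (cases "P = {}")
    case True
    have "\<forall>\<rho>\<in>M. r \<notin> \<rho>"
    proof
      fix \<rho> assume rm: "\<rho> \<in> M"
      show "r \<notin> \<rho>"
      proof
        assume rr: "r \<in> \<rho>"
        then have "\<rho> - {w} \<in> M" using less.prems(5) rm by blast
        then have "\<rho> - {w} \<in> P" using rr less.prems(3) unfolding P_def by blast
        then show False using True by simp
      qed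
    qed
    then have eq: "{\<rho>\<in>M. r \<notin> \<rho>} = M" by blast
    show ?thesis unfolding collapses_def eq by (rule rtranclp.rtrancl_refl)
  next
    case False
    have "finite P" using less.prems(1) unfolding P_def by simp
    then obtain \<rho>0 where r0: "\<rho>0 \<in> P" and mx: "\<forall>b\<in>P. \<rho>0 \<subseteq> b \<longrightarrow> \<rho>0 = b"
      using finite_has_maximal[OF _ False] by blast
    have r0M: "\<rho>0 \<in> M" "r \<in> \<rho>0" "w \<notin> \<rho>0" using r0 unfolding P_def by auto
    have wM: "insert w \<rho>0 \<in> M" using less.prems(4) r0M by blast
    have co: "\<And>\<rho>'. \<rho>' \<in> M \<Longrightarrow> \<rho>0 \<subset> \<rho>' \<Longrightarrow> \<rho>' = insert w \<rho>0"
    proof -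
      fix \<rho>' assume a: "\<rho>' \<in> M" "\<rho>0 \<subset> \<rho>'"
      have "\<rho>' - {w} \<in> P" using less.prems(5) a r0M unfolding P_def by blast
      moreover have "\<rho>0 \<subseteq> \<rho>' - {w}" using a r0M by blast
      ultimately have "\<rho>0 = \<rho>' - {w}" using mx by blast
      then show "\<rho>' = insert w \<rho>0" using a by blast
    qed
    have ex1: "\<exists>!x. x \<in> M \<and> \<rho>0 \<subset> x"
    proof (rule ex1I[of _ "insert w \<rho>0"])
      show "insert w \<rho>0 \<in> M \<and> \<rho>0 \<subset> insert w \<rho>0" using wM r0M by blast
    next
      fix x assume "x \<in> M \<and> \<rho>0 \<subset> x"
      then show "x = insert w \<rho>0" using co by blast
    qed
    have ff: "free_face \<rho>0 M"
      unfolding free_face_def using r0M(1) ex1 by blast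
    define M' where "M' = M - {\<rho>0, insert w \<rho>0}"
    have ec: "elementary_collapse M M'"
      unfolding elementary_collapse_def M'_def
      apply (rule exI[of _ \<rho>0], rule exI[of _ "insert w \<rho>0"])
      using ff wM r0M by blast
    have sub: "{\<rho>\<in>M'. r \<in> \<rho>} \<subset> {\<rho>\<in>M. r \<in> \<rho>}"
      using r0M unfolding M'_def by blast
    have lt: "card {\<rho>\<in>M'. r \<in> \<rho>} < card {\<rho>\<in>M. r \<in> \<rho>}"
      using sub less.prems(1) by (simp add: psubset_card_mono)
    have p4: "\<forall>\<rho>\<in>M'. r \<in> \<rho> \<and> w \<notin> \<rho> \<longrightarrow> insert w \<rho> \<in> M'"
    proof (intro ballI impI)
      fix \<rho> assume a: "\<rho> \<in> M'" "r \<in> \<rho> \<and> w \<notin> \<rho>"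
      have "insert w \<rho> \<in> M" using a less.prems(4) unfolding M'_def by blast
      moreover have "insert w \<rho> \<noteq> \<rho>0" using r0M by blast
      moreover have "insert w \<rho> \<noteq> insert w \<rho>0"
      proof
        assume "insert w \<rho> = insert w \<rho>0"
        then have "\<rho> = \<rho>0" using a r0M by (metis Diff_insert_absorb)
        then show False using a unfolding M'_def by blast
      qed
      ultimately show "insert w \<rho> \<in> M'" unfolding M'_def by blast
    qed
    have p5: "\<forall>\<rho>\<in>M'. r \<in> \<rho> \<longrightarrow> \<rho> - {w} \<in> M'"
    proof (intro ballI impI)
      fix \<rho> assume a: "\<rho> \<in> M'" "r \<in> \<rho>"
      have "\<rho> - {w} \<in> M" using a less.prems(5) unfolding M'_def by blast
      moreover have "\<rho> - {w} \<noteq> \<rho>0"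
      proof
        assume e: "\<rho> - {w} = \<rho>0"
        then have "\<rho> = \<rho>0 \<or> \<rho> = insert w \<rho>0" by blast
        then show False using a unfolding M'_def by blast
      qed
      moreover have "\<rho> - {w} \<noteq> insert w \<rho>0" by blast
      ultimately show "\<rho> - {w} \<in> M'" unfolding M'_def by blast
    qed
    have IH: "collapses M' {\<rho>\<in>M'. r \<notin> \<rho>}"
      apply (rule less.hyps[OF lt])
      using less.prems(1,2,3) p4 p5 unfolding M'_def by simp_all
    have eq: "{\<rho>\<in>M'. r \<notin> \<rho>} = {\<rho>\<in>M. r \<notin> \<rho>}" using r0M unfolding M'_def by blast
    show ?thesis using ec IH eq unfolding collapses_def
      by (metis converse_rtranclp_into_rtranclp)
  qed
qed



lemma img_id: "r \<notin> \<rho> \<Longrightarrow> (\<lambda>y. if y = r then w else y) ` \<rho> = \<rho>"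
  by (force simp: image_iff)
lemma img_ins: "r \<notin> \<tau> \<Longrightarrow> (\<lambda>y. if y = r then w else y) ` insert r \<tau> = insert w \<tau>"
  using img_id[of r \<tau> w] by simp
lemma img_in: "r \<in> \<rho> \<Longrightarrow> (\<lambda>y. if y = r then w else y) ` \<rho> = insert w (\<rho> - {r})"
  using img_ins[of r "\<rho> - {r}" w] by (metis Diff_iff insert_Diff singletonI)

lemma sc_face: "simplicial_complex K \<Longrightarrow> \<sigma> \<in> K \<Longrightarrow> \<tau> \<subseteq> \<sigma> \<Longrightarrow> \<tau> \<noteq> {} \<Longrightarrow> \<tau> \<in> K"
  unfolding simplicial_complex_def by blast

lemma incl_case:
  assumes KA: "K = actpart H A" and fcH: "fc H"
    and vert: "\<forall>\<rho>\<in>H. \<forall>x\<in>\<rho>. x \<in> V"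
    and col: "collapses H K"
    and sK: "\<sigma> \<notin> K" and K': "K' = insert \<sigma> K" and sc: "simplicial_complex K'"
    and fr: "card \<sigma> = 1 \<longrightarrow> \<sigma> \<inter> V = {}"
    and H': "H' = insert \<sigma> H"
    and A': "A' = (if card \<sigma> = 1 then A \<union> \<sigma> else A)"
  shows "K' = actpart H' A' \<and> fc H' \<and> collapses H' K'"
proof -
  have sK': "\<sigma> \<in> K'" using K' by simp
  have sA: "\<sigma> \<subseteq> A'"
  proof
    fix x assume x: "x \<in> \<sigma>"
    show "x \<in> A'"
    proof (cases "card \<sigma> = 1")
      case True then show ?thesis using x A' by simp
    next
      case False
      have "{x} \<in> K'" using sc_face[OF sc sK', of "{x}"] x by simp
      moreover have "{x} \<noteq> \<sigma>" using False by auto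
      ultimately have "{x} \<in> K" using K' by blast
      then have "{x} \<subseteq> A" using KA unfolding actpart_def by blast
      then show ?thesis using A' False by simp
    qed
  qed
  have key: "\<And>\<tau>. \<tau> \<in> H \<Longrightarrow> \<tau> \<subseteq> A' \<Longrightarrow> \<tau> \<in> K"
  proof -
    fix \<tau> assume t: "\<tau> \<in> H" "\<tau> \<subseteq> A'"
    have "\<tau> \<subseteq> A"
    proof (cases "card \<sigma> = 1")
      case True
      have "\<tau> \<inter> \<sigma> = {}" using vert t fr True by blast
      then show ?thesis using t A' True by auto
    next
      case False then show ?thesis using t A' by simp
    qed
    then show "\<tau> \<in> K" using KA t unfolding actpart_def by blast
  qed
  have AA: "A \<subseteq> A'" using A' by auto
  have c1: "K' = actpart H' A'"
  proof
    show "K' \<subseteq> actpart H' A'" using K' KA H' sA AA unfolding actpart_def by blast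
    show "actpart H' A' \<subseteq> K'" using key K' H' unfolding actpart_def by blast
  qed
  have c2: "fc H'"
    unfolding fc_def
  proof (intro ballI allI impI)
    fix \<rho> \<tau> assume r: "\<rho> \<in> H'" and t: "\<tau> \<subseteq> \<rho> \<and> \<tau> \<noteq> {}"
    show "\<tau> \<in> H'"
    proof (cases "\<rho> = \<sigma>")
      case True
      then have "\<tau> \<in> K'" using sc_face[OF sc sK', of \<tau>] t by simp
      then show ?thesis using K' KA H' unfolding actpart_def by blast
    next
      case False
      then show ?thesis using r t fcH H' unfolding fc_def by blast
    qed
  qed
  have "collapses (H \<union> {\<sigma>}) (K \<union> {\<sigma>})"
    apply (rule lift[OF col])
    using key sA by blast
  then have c3: "collapses H' K'" using H' K' by simp
  show ?thesis using c1 c2 c3 by blast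
qed

lemma contr_case:
  assumes KA: "K = actpart H A" and fcH: "fc H"
    and col: "collapses H K" and sc: "simplicial_complex K"
    and rw: "r \<noteq> w" and rV: "r \<in> vertices K" and wV: "w \<in> vertices K"
    and H': "H' = cone_step H A r w" and A': "A' = A - {r}" and K': "K' = contract K r w"
  shows "K' = actpart H' A' \<and> fc H' \<and> collapses H' K'"
proof -
  define S where "S = act_closed_star r H A"
  define C where "C = insert w ` S"
  have H'C: "H' = H \<union> C" using H' unfolding cone_step_def C_def S_def by simp
  have KH: "K \<subseteq> H" and KAs: "\<forall>\<rho>\<in>K. \<rho> \<subseteq> A" using KA unfolding actpart_def by auto
  have HK: "\<And>\<rho>. \<rho> \<in> H \<Longrightarrow> \<rho> \<subseteq> A \<Longrightarrow> \<rho> \<in> K" using KA unfolding actpart_def by auto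
  have Kfin: "finite K" and Kel: "\<forall>\<rho>\<in>K. finite \<rho> \<and> \<rho> \<noteq> {}"
    and Kfc: "\<And>\<rho> \<tau>. \<rho> \<in> K \<Longrightarrow> \<tau> \<subseteq> \<rho> \<Longrightarrow> \<tau> \<noteq> {} \<Longrightarrow> \<tau> \<in> K"
    using sc unfolding simplicial_complex_def by blast+
  have wK: "{w} \<in> K" using wV Kfc unfolding vertices_def by blast
  have rK: "{r} \<in> K" using rV Kfc unfolding vertices_def by blast
  have wA: "w \<in> A" using wK KAs by blast
  have rA: "r \<in> A" using rK KAs by blast
  have SK: "S \<subseteq> K" using HK unfolding S_def act_closed_star_def closed_star_def by blast
  have S_mem: "\<And>\<tau>. \<tau> \<in> S \<longleftrightarrow> \<tau> \<in> H \<and> \<tau> \<subseteq> A \<and> (\<exists>\<sigma>\<in>H. r \<in> \<sigma> \<and> \<tau> \<subseteq> \<sigma>)"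
    unfolding S_def act_closed_star_def closed_star_def by blast
  have CA: "\<forall>\<rho>\<in>C. \<rho> \<subseteq> A" using SK KAs wA unfolding C_def by blast
  have col1: "collapses (H \<union> C) (K \<union> C)"
    apply (rule lift[OF col])
    using CA HK by blast
  define M where "M = K \<union> C"
  have Mfin: "finite M" using Kfin unfolding M_def C_def using SK finite_subset by blast
  have Mel: "\<forall>\<rho>\<in>M. finite \<rho>" using Kel SK unfolding M_def C_def by blast
  have M4: "\<forall>\<rho>\<in>M. r \<in> \<rho> \<and> w \<notin> \<rho> \<longrightarrow> insert w \<rho> \<in> M"
  proof (intro ballI impI)
    fix \<rho> assume a: "\<rho> \<in> M" "r \<in> \<rho> \<and> w \<notin> \<rho>"
    have "\<rho> \<in> K" using a unfolding M_def C_def by blast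
    then have "\<rho> \<in> S" using S_mem KH KAs a by blast
    then show "insert w \<rho> \<in> M" unfolding M_def C_def by blast
  qed
  have M5: "\<forall>\<rho>\<in>M. r \<in> \<rho> \<longrightarrow> \<rho> - {w} \<in> M"
  proof (intro ballI impI)
    fix \<rho> assume a: "\<rho> \<in> M" "r \<in> \<rho>"
    show "\<rho> - {w} \<in> M"
    proof (cases "\<rho> \<in> K")
      case True
      then show ?thesis using Kfc[of \<rho> "\<rho> - {w}"] a rw unfolding M_def by blast
    next
      case False
      then obtain \<tau> where t: "\<tau> \<in> S" "\<rho> = insert w \<tau>" using a unfolding M_def C_def by blast
      have "\<tau> \<in> K" using t SK by blast
      moreover have "r \<in> \<tau>" using a t rw by blast
      ultimately have "\<tau> - {w} \<in> K" using Kfc[of \<tau> "\<tau> - {w}"] rw by blast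
      moreover have "\<rho> - {w} = \<tau> - {w}" using t by blast
      ultimately show ?thesis unfolding M_def by simp
    qed
  qed
  have col2: "collapses M {\<rho>\<in>M. r \<notin> \<rho>}"
    by (rule cone_collapse[OF Mfin Mel rw M4 M5])
  have contr_eq: "contract K r w = {\<rho>\<in>M. r \<notin> \<rho>}"
  proof
    show "contract K r w \<subseteq> {\<rho>\<in>M. r \<notin> \<rho>}"
    proof
      fix x assume "x \<in> contract K r w"
      then obtain \<rho> where r: "\<rho> \<in> K" and x: "x = (\<lambda>y. if y = r then w else y) ` \<rho>"
        unfolding contract_def by blast
      show "x \<in> {\<rho>\<in>M. r \<notin> \<rho>}"
      proof (cases "r \<in> \<rho>")
        case False
        have "x = \<rho>" using x False img_id by metis
        then show ?thesis using r False unfolding M_def by blast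
      next
        case True
        have xe: "x = insert w (\<rho> - {r})" using x True img_in by metis
        show ?thesis
        proof (cases "\<rho> - {r} = {}")
          case True
          then have "x = {w}" using xe by blast
          then show ?thesis using wK rw unfolding M_def by simp
        next
          case False
          have rK': "\<rho> - {r} \<in> K" by (rule Kfc[OF r]) (use False in auto)
          have "\<rho> - {r} \<in> H" "\<rho> - {r} \<subseteq> A" "\<rho> \<in> H" using rK' KH KAs r by auto
          then have "\<rho> - {r} \<in> S" unfolding S_mem using True by blast
          then have "x \<in> C" unfolding C_def xe by (rule imageI)
          moreover have "r \<notin> x" using xe rw by simp
          ultimately show ?thesis unfolding M_def by simp
        qed
      qed
    qed
  next
    show "{\<rho>\<in>M. r \<notin> \<rho>} \<subseteq> contract K r w"
    proof
      fix x assume a: "x \<in> {\<rho>\<in>M. r \<notin> \<rho>}"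
      show "x \<in> contract K r w"
      proof (cases "x \<in> K")
        case True
        have "r \<notin> x" using a by simp
        then have "x = (\<lambda>y. if y = r then w else y) ` x" using img_id by metis
        then show ?thesis unfolding contract_def using True by (rule image_eqI)
      next
        case False
        have "x \<in> C" using a False unfolding M_def by simp
        then obtain \<tau> where t: "\<tau> \<in> S" "x = insert w \<tau>" unfolding C_def by blast
        obtain \<sigma> where s: "\<sigma> \<in> H" "r \<in> \<sigma>" "\<tau> \<subseteq> \<sigma>" "\<tau> \<in> H" "\<tau> \<subseteq> A" using t(1) unfolding S_mem by blast
        have "insert r \<tau> \<subseteq> \<sigma>" using s by blast
        then have "insert r \<tau> \<in> H" using fcH s(1) unfolding fc_def by blast
        then have irK: "insert r \<tau> \<in> K" using HK s(5) rA by blast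
        have rt: "r \<notin> \<tau>" using a t by simp
        have "(\<lambda>y. if y = r then w else y) ` insert r \<tau> = x"
          using t(2) img_ins[OF rt] by simp
        then have "x = (\<lambda>y. if y = r then w else y) ` insert r \<tau>" by simp
        then show ?thesis unfolding contract_def using irK by (rule image_eqI)
      qed
    qed
  qed
  have K'e: "K' = {\<rho> \<in> K \<union> C. r \<notin> \<rho>}" using contr_eq K' unfolding M_def by simp
  have "collapses (K \<union> C) K'" using col2 K'e unfolding M_def by simp
  then have c3: "collapses H' K'"
    using col1 H'C unfolding collapses_def by (metis rtranclp_trans)
  have c1: "K' = actpart H' A'"
  proof
    show "K' \<subseteq> actpart H' A'"
    proof
      fix \<rho> assume a: "\<rho> \<in> K'"
      then have a1: "\<rho> \<in> K \<union> C" "r \<notin> \<rho>" using K'e by auto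
      then have "\<rho> \<subseteq> A" using KAs CA by blast
      moreover have "\<rho> \<in> H'" using a1 KH H'C by blast
      ultimately show "\<rho> \<in> actpart H' A'" using a1 A' unfolding actpart_def by blast
    qed
    show "actpart H' A' \<subseteq> K'"
    proof
      fix \<rho> assume a: "\<rho> \<in> actpart H' A'"
      then have a1: "\<rho> \<in> H \<union> C" "\<rho> \<subseteq> A" "r \<notin> \<rho>" using H'C A' unfolding actpart_def by auto
      then have "\<rho> \<in> K \<union> C" using HK by blast
      then show "\<rho> \<in> K'" using K'e a1 by simp
    qed
  qed
  have c2: "fc H'"
    unfolding fc_def
  proof (intro ballI allI impI)
    fix \<rho> \<tau> assume r: "\<rho> \<in> H'" and t: "\<tau> \<subseteq> \<rho> \<and> \<tau> \<noteq> {}"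
    show "\<tau> \<in> H'"
    proof (cases "\<rho> \<in> H")
      case True
      then show ?thesis using t fcH H'C unfolding fc_def by blast
    next
      case False
      then obtain \<tau>0 where t0: "\<tau>0 \<in> S" "\<rho> = insert w \<tau>0" using r H'C unfolding C_def by blast
      obtain \<sigma> where s: "\<sigma> \<in> H" "r \<in> \<sigma>" "\<tau>0 \<subseteq> \<sigma>" "\<tau>0 \<in> H" "\<tau>0 \<subseteq> A" using t0(1) unfolding S_mem by blast
      show ?thesis
      proof (cases "w \<in> \<tau>")
        case False
        then have "\<tau> \<subseteq> \<tau>0" using t t0 by blast
        then show ?thesis using fcH s t H'C unfolding fc_def by blast
      next
        case True
        show ?thesis
        proof (cases "\<tau> - {w} = {}")
          case True
          then have "\<tau> = {w}" using \<open>w \<in> \<tau>\<close> by blast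
          then show ?thesis using wK KH H'C by blast
        next
          case False
          have "\<tau> - {w} \<subseteq> \<tau>0" using t t0 by blast
          moreover have "\<tau> - {w} \<in> H" using fcH s(4) \<open>\<tau> - {w} \<subseteq> \<tau>0\<close> False unfolding fc_def by blast
          ultimately have "\<tau> - {w} \<in> S" unfolding S_mem using s by blast
          then have "insert w (\<tau> - {w}) \<in> C" unfolding C_def by blast
          moreover have "insert w (\<tau> - {w}) = \<tau>" using True by blast
          ultimately show ?thesis using H'C by simp
        qed
      qed
    qed
  qed
  show ?thesis using c1 c2 c3 by blast
qed


lemma inv:
  assumes T: "coning_tower K s m"
  shows "i \<le> m \<Longrightarrow> K i = actpart (hatK s i) (active s i) \<and> fc (hatK s i) \<and>
     (\<forall>\<rho>\<in>hatK s i. \<forall>x\<in>\<rho>. \<exists>j\<le>i. x \<in> vertices (K j)) \<and> collapses (hatK s i) (K i)"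
proof (induction i)
  case 0
  have K0: "K 0 = {}" using T unfolding coning_tower_def by blast
  have "hatK s 0 = {}" "active s 0 = {}" unfolding hatK_def active_def by simp_all
  then show ?case using K0 unfolding actpart_def fc_def collapses_def by simp
next
  case (Suc i)
  then have im: "i < m" by simp
  have IH: "K i = actpart (hatK s i) (active s i)" "fc (hatK s i)"
     "\<forall>\<rho>\<in>hatK s i. \<forall>x\<in>\<rho>. \<exists>j\<le>i. x \<in> vertices (K j)" "collapses (hatK s i) (K i)"
    using Suc by auto
  define H where "H = hatK s i"
  define A where "A = active s i"
  have scH: "small_coning s i = (H, A)" unfolding H_def A_def hatK_def active_def by simp
  have scK: "simplicial_complex (K i)" "simplicial_complex (K (Suc i))"
    using T im unfolding coning_tower_def by auto
  have step: "case s i of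
        Incl \<sigma> \<Rightarrow> \<sigma> \<notin> K i \<and> K (Suc i) = insert \<sigma> (K i) \<and>
                   (\<forall>j\<le>i. \<sigma> \<inter> vertices (K j) = {} \<or> card \<sigma> \<noteq> 1)
      | Contr u v \<Rightarrow> u \<noteq> v \<and> u \<in> vertices (K i) \<and> v \<in> vertices (K i) \<and>
          K (Suc i) = contract (K i)
              (coning_removed (hatK s i) (active s i) u v)
              (coning_survivor (hatK s i) (active s i) u v)"
    using T im unfolding coning_tower_def by blast
  show ?case
  proof (cases "s i")
    case (Incl \<sigma>)
    have st: "\<sigma> \<notin> K i" "K (Suc i) = insert \<sigma> (K i)" "\<forall>j\<le>i. \<sigma> \<inter> vertices (K j) = {} \<or> card \<sigma> \<noteq> 1"
      using step Incl by auto
    have hs: "hatK s (Suc i) = insert \<sigma> H" "active s (Suc i) = (if card \<sigma> = 1 then A \<union> \<sigma> else A)"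
      unfolding hatK_def active_def using scH Incl by simp_all
    define V where "V = {x. \<exists>j\<le>i. x \<in> vertices (K j)}"
    have vert: "\<forall>\<rho>\<in>H. \<forall>x\<in>\<rho>. x \<in> V" using IH(3) unfolding V_def H_def by blast
    have fr: "card \<sigma> = 1 \<longrightarrow> \<sigma> \<inter> V = {}" using st(3) unfolding V_def by blast
    have main: "K (Suc i) = actpart (insert \<sigma> H) (if card \<sigma> = 1 then A \<union> \<sigma> else A) \<and> fc (insert \<sigma> H) \<and> collapses (insert \<sigma> H) (K (Suc i))"
      by (rule incl_case[OF IH(1)[folded H_def A_def] IH(2)[folded H_def] vert IH(4)[folded H_def] st(1) st(2) scK(2) fr refl refl])
    have sv: "\<forall>x\<in>\<sigma>. x \<in> vertices (K (Suc i))" using st(2) unfolding vertices_def by blast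
    have v2: "\<forall>\<rho>\<in>insert \<sigma> H. \<forall>x\<in>\<rho>. \<exists>j\<le>Suc i. x \<in> vertices (K j)"
    proof (intro ballI)
      fix \<rho> x assume a: "\<rho> \<in> insert \<sigma> H" "x \<in> \<rho>"
      show "\<exists>j\<le>Suc i. x \<in> vertices (K j)"
      proof (cases "\<rho> = \<sigma>")
        case True then show ?thesis using sv a by blast
      next
        case False
        then have "\<rho> \<in> H" using a by blast
        then obtain j where "j \<le> i" "x \<in> vertices (K j)" using IH(3) a unfolding H_def by blast
        then show ?thesis using le_SucI by blast
      qed
    qed
    show ?thesis unfolding hs using main v2 by blast
  next
    case (Contr u v)
    have st: "u \<noteq> v" "u \<in> vertices (K i)" "v \<in> vertices (K i)"
      "K (Suc i) = contract (K i) (coning_removed H A u v) (coning_survivor H A u v)"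
      using step Contr unfolding H_def A_def by auto
    define r where "r = coning_removed H A u v"
    define w where "w = coning_survivor H A u v"
    have rw: "r \<noteq> w" using st(1) unfolding r_def w_def coning_removed_def coning_survivor_def by auto
    have rV: "r \<in> vertices (K i)" using st(2,3) unfolding r_def coning_removed_def by auto
    have wV: "w \<in> vertices (K i)" using st(2,3) unfolding w_def coning_survivor_def by auto
    have hs: "hatK s (Suc i) = cone_step H A r w" "active s (Suc i) = A - {r}"
      unfolding hatK_def active_def r_def w_def using scH Contr by simp_all
    have main: "K (Suc i) = actpart (cone_step H A r w) (A - {r}) \<and> fc (cone_step H A r w) \<and> collapses (cone_step H A r w) (K (Suc i))"
      by (rule contr_case[OF IH(1)[folded H_def A_def] IH(2)[folded H_def] IH(4)[folded H_def] scK(1) rw rV wV refl refl])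
        (use st(4) in \<open>simp add: r_def w_def\<close>)
    have v2: "\<forall>\<rho>\<in>cone_step H A r w. \<forall>x\<in>\<rho>. \<exists>j\<le>Suc i. x \<in> vertices (K j)"
    proof (intro ballI)
      fix \<rho> x assume a: "\<rho> \<in> cone_step H A r w" "x \<in> \<rho>"
      show "\<exists>j\<le>Suc i. x \<in> vertices (K j)"
      proof (cases "\<rho> \<in> H")
        case True
        then obtain j where "j \<le> i" "x \<in> vertices (K j)" using IH(3) a unfolding H_def by blast
        then show ?thesis using le_SucI by blast
      next
        case False
        then obtain \<tau> where t: "\<tau> \<in> act_closed_star r H A" "\<rho> = insert w \<tau>"
          using a unfolding cone_step_def by blast
        have tH: "\<tau> \<in> H" using t(1) unfolding act_closed_star_def closed_star_def by blast
        show ?thesis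
        proof (cases "x = w")
          case True then show ?thesis using wV by (intro exI[of _ i]) simp
        next
          case False
          then have "x \<in> \<tau>" using a t by blast
          then obtain j where "j \<le> i" "x \<in> vertices (K j)" using IH(3) tH unfolding H_def by blast
          then show ?thesis using le_SucI by blast
        qed
      qed
    qed
    show ?thesis unfolding hs using main v2 by blast
  qed
qed

theorem lemma5:
  fixes K :: "nat \<Rightarrow> 'v set set" and s :: "nat \<Rightarrow> 'v step" and m :: nat
  assumes "coning_tower K s m"
  shows "\<forall>i\<le>m. K i \<subseteq> hatK s i \<and> collapses (hatK s i) (K i)"
proof (intro allI impI)
  fix i assume "i \<le> m"
  from inv[OF assms this] show "K i \<subseteq> hatK s i \<and> collapses (hatK s i) (K i)"
    unfolding actpart_def by blast
qed

end
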